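(* Let $f:\mathbb{R}^n\to\mathbb{R}$ be differentiable with $\nabla f$ $L$-Lipschitz continuous ($L>0$), let $\beta\in[0,1]$, $h=\frac{0.9}{L}$, and let $x\in\mathbb{R}^n$ with $\nabla f(x)\neq0$. Put $z=x-h\nabla f(x)$ and $$\alpha=\frac{(1-\beta)\left(1-\frac{Lh}{4}\right)\|x-z\|^2+\beta\langle x-z,h\nabla f(z)\rangle}{h^2\|\nabla f(x)-\beta(\nabla f(x)-\nabla f(z))\|^2}.$$ Then the denominator is nonzero and $\alpha>\frac12$; consequently $\eta:=1/\alpha\in(0,2)$ and $x-\eta\alpha h\big(\nabla f(x)-\beta(\nabla f(x)-\nabla f(z))\big)=x-h\big(\nabla f(x)-\beta(\nabla f(x)-\nabla f(z))\big)$. *)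

theory Defs
  imports "HOL-Analysis.Analysis"
begin

end

theory Submission
  imports Defs
begin

theorem mainTheorem14:
  fixes f :: "real ^ 'n \<Rightarrow> real" and grad :: "real ^ 'n \<Rightarrow> real ^ 'n"
    and L \<beta> h \<alpha> \<eta> :: real and x z :: "real ^ 'n"
  assumes grad: "\<And>y. (f has_derivative (\<lambda>v. grad y \<bullet> v)) (at y)"
    and lip: "L-lipschitz_on UNIV grad"
    and Lpos: "L > 0"
    and beta: "0 \<le> \<beta>" "\<beta> \<le> 1"
    and h_def: "h = 0.9 / L"
    and gx: "grad x \<noteq> 0"
    and z_def: "z = x - h *\<^sub>R grad x"
    and alpha_def: "\<alpha> = ((1 - \<beta>) * (1 - L * h / 4) * (norm (x - z))\<^sup>2
                           + \<beta> * ((x - z) \<bullet> (h *\<^sub>R grad z)))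
                         / (h\<^sup>2 * (norm (grad x - \<beta> *\<^sub>R (grad x - grad z)))\<^sup>2)"
    and eta_def: "\<eta> = 1 / \<alpha>"
  shows "h\<^sup>2 * (norm (grad x - \<beta> *\<^sub>R (grad x - grad z)))\<^sup>2 \<noteq> 0
         \<and> \<alpha> > 1 / 2
         \<and> \<eta> \<in> {0<..<2}
         \<and> x - (\<eta> * \<alpha> * h) *\<^sub>R (grad x - \<beta> *\<^sub>R (grad x - grad z))
             = x - h *\<^sub>R (grad x - \<beta> *\<^sub>R (grad x - grad z))"
proof -
  define g where "g = grad x"
  define d where "d = grad z - grad x"
  have Lh: "L * h = 0.9" using Lpos h_def by simp
  have hpos: "h > 0" using Lpos h_def by simp
  have xz: "x - z = h *\<^sub>R g" using z_def g_def by simp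
  have "dist (grad z) (grad x) \<le> L * dist z x" using lip by (simp add: lipschitz_on_def)
  moreover have "dist z x = h * norm g" using z_def g_def hpos by (simp add: dist_norm)
  ultimately have "norm d \<le> L * (h * norm g)" by (simp add: d_def dist_norm)
  hence td: "norm d \<le> 0.9 * norm g" using Lh by (simp add: mult.assoc[symmetric])
  have spos: "norm g > 0" using gx g_def by simp
  have cs: "\<bar>g \<bullet> d\<bar> \<le> norm g * norm d" by (rule Cauchy_Schwarz_ineq2)
  have gz: "grad z = g + d" using d_def g_def by simp
  have v: "grad x - \<beta> *\<^sub>R (grad x - grad z) = g + \<beta> *\<^sub>R d" using gz g_def by (simp add: algebra_simps)
  have nv: "(norm (g + \<beta> *\<^sub>R d))\<^sup>2 = (norm g)\<^sup>2 + 2 * \<beta> * (g \<bullet> d) + \<beta>\<^sup>2 * (norm d)\<^sup>2"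
    unfolding power2_norm_eq_inner by (simp add: inner_add_left inner_add_right power2_eq_square inner_commute algebra_simps)
  have num: "(1 - \<beta>) * (1 - L * h / 4) * (norm (x - z))\<^sup>2 + \<beta> * ((x - z) \<bullet> (h *\<^sub>R grad z))
     = h\<^sup>2 * ((1 - \<beta>) * (1 - 0.9 / 4) * (norm g)\<^sup>2 + \<beta> * ((norm g)\<^sup>2 + g \<bullet> d))"
  proof -
    have a1: "(norm (x - z))\<^sup>2 = h\<^sup>2 * (norm g)\<^sup>2" using xz hpos by (simp add: power_mult_distrib)
    have a2: "(x - z) \<bullet> (h *\<^sub>R grad z) = h\<^sup>2 * ((norm g)\<^sup>2 + g \<bullet> d)"
      unfolding xz gz power2_norm_eq_inner by (simp add: inner_add_right power2_eq_square algebra_simps)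
    have a3: "L * h / 4 = 0.9 / 4" using Lh by simp
    show ?thesis unfolding a1 a2 a3 by (simp add: algebra_simps)
  qed
  define s where "s = norm g"
  define t where "t = norm d"
  define c where "c = g \<bullet> d"
  have t0: "t \<ge> 0" unfolding t_def by simp
  have c1: "c \<ge> - (s * t)" using cs unfolding s_def t_def c_def by linarith
  have ts: "t \<le> 0.9 * s" using td s_def t_def by simp
  have sp: "s > 0" using spos s_def by simp
  have bt: "\<beta> * t \<le> 0.9 * s" using ts beta t0
    by (metis mult_left_le_one_le order_trans)
  have Dpos: "s\<^sup>2 + 2 * \<beta> * c + \<beta>\<^sup>2 * t\<^sup>2 > 0"
  proof -
    have "s\<^sup>2 + 2 * \<beta> * c + \<beta>\<^sup>2 * t\<^sup>2 \<ge> (s - \<beta> * t)\<^sup>2"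
    proof -
      have "\<beta> * (c + s * t) \<ge> 0" using c1 beta by simp
      thus ?thesis by (simp add: power2_eq_square algebra_simps)
    qed
    moreover have "(s - \<beta> * t)\<^sup>2 > 0" using bt sp by simp
    ultimately show ?thesis by linarith
  qed
  have key: "2 * ((1 - \<beta>) * (1 - 0.9 / 4) * s\<^sup>2 + \<beta> * (s\<^sup>2 + c)) > s\<^sup>2 + 2 * \<beta> * c + \<beta>\<^sup>2 * t\<^sup>2"
  proof -
    have "\<beta>\<^sup>2 * t\<^sup>2 \<le> 0.81 * \<beta>\<^sup>2 * s\<^sup>2"
    proof -
      have "t\<^sup>2 \<le> (0.9 * s)\<^sup>2" using ts t0 by (intro power_mono) auto
      hence "t\<^sup>2 \<le> 0.81 * s\<^sup>2" by (simp add: power2_eq_square)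
      hence "\<beta>\<^sup>2 * t\<^sup>2 \<le> \<beta>\<^sup>2 * (0.81 * s\<^sup>2)" by (intro mult_left_mono) auto
      thus ?thesis by simp
    qed
    moreover have "0.81 * \<beta>\<^sup>2 * s\<^sup>2 < (0.55 + 0.45 * \<beta>) * s\<^sup>2"
    proof -
      have "0.81 * \<beta>\<^sup>2 < 0.55 + 0.45 * \<beta>" 
      proof -
        have "\<beta> * \<beta> \<le> \<beta>" using beta mult_left_le by blast
        thus ?thesis using beta by (simp add: power2_eq_square)
      qed
      moreover have "s\<^sup>2 > 0" using sp by simp
      ultimately show ?thesis by simp
    qed
    ultimately show ?thesis by (simp add: field_simps)
  qed
  define D where "D = h\<^sup>2 * (norm (grad x - \<beta> *\<^sub>R (grad x - grad z)))\<^sup>2"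
  have Deq: "D = h\<^sup>2 * (s\<^sup>2 + 2 * \<beta> * c + \<beta>\<^sup>2 * t\<^sup>2)" unfolding D_def v nv s_def t_def c_def ..
  have Dp: "D > 0" unfolding Deq using Dpos hpos by simp
  have al: "\<alpha> = h\<^sup>2 * ((1 - \<beta>) * (1 - 0.9 / 4) * s\<^sup>2 + \<beta> * (s\<^sup>2 + c)) / D"
    unfolding alpha_def num D_def s_def c_def ..
  have ahalf: "\<alpha> > 1 / 2"
  proof -
    have "h\<^sup>2 * ((1 - \<beta>) * (1 - 0.9 / 4) * s\<^sup>2 + \<beta> * (s\<^sup>2 + c)) > D / 2"
    proof -
      have "h\<^sup>2 * (s\<^sup>2 + 2 * \<beta> * c + \<beta>\<^sup>2 * t\<^sup>2) < h\<^sup>2 * (2 * ((1 - \<beta>) * (1 - 0.9 / 4) * s\<^sup>2 + \<beta> * (s\<^sup>2 + c)))"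
        using key hpos by (intro mult_strict_left_mono) auto
      thus ?thesis unfolding Deq by (simp add: field_simps)
    qed
    thus ?thesis unfolding al using Dp by (simp add: field_simps)
  qed
  have e1: "\<eta> * \<alpha> = 1" using ahalf eta_def by simp
  have eta: "\<eta> \<in> {0<..<2}"
  proof -
    have "\<eta> > 0" using ahalf eta_def by simp
    moreover have "1 / \<alpha> < 2" using ahalf by (simp add: divide_less_eq)
    ultimately show ?thesis using eta_def by simp
  qed
  have "h\<^sup>2 * (norm (grad x - \<beta> *\<^sub>R (grad x - grad z)))\<^sup>2 \<noteq> 0" using Dp D_def by linarith
  moreover have "x - (\<eta> * \<alpha> * h) *\<^sub>R (grad x - \<beta> *\<^sub>R (grad x - grad z))
             = x - h *\<^sub>R (grad x - \<beta> *\<^sub>R (grad x - grad z))" using e1 by simp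
  ultimately show ?thesis using ahalf eta by blast
qed

end
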